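(* Let $G=(V,E)$ be a finite simple graph with $V=\{x_1,\dots,x_r\}$, $E=\{e_1,\dots,e_n\}$, and suppose $(x_1,x_2,x_3,x_4)$ is a path of $G$ with edges $e_1=\{x_1,x_2\}$, $e_2=\{x_2,x_3\}$, $e_3=\{x_3,x_4\}$. Let $s=w_1x_1+w_2x_2+w_3x_3+\cdots+w_rx_r\in\operatorname{Im}(\varphi_G)$ be such that $\Delta^G_s$ is not acyclic. Then $w_2=w_3$.
   Context: $\mathbb{N}[V]$ and $\mathbb{N}[E]$ denote the free commutative monoids on $V$ and on $E$, and $\varphi_G:\mathbb{N}[E]\to\mathbb{N}[V]$ is the monoid homomorphism with $\varphi_G(e_j)=x_{j_1}+x_{j_2}$ for $e_j=\{x_{j_1},x_{j_2}\}$. For $F\subseteq[n]$ put $e_F=\sum_{i\in F}e_i$, and for $s\in\mathbb{N}[V]$ let $\Delta^G_s=\{F\subseteq[n]: s-\varphi_G(e_F)\in\operatorname{Im}(\varphi_G)\}$ (difference computed in $\mathbb{Z}^V$), a simplicial complex on $[n]$. It is acyclic if all its reduced homology groups with coefficients in $\mathbb{K}$ vanish. A path is a walk $(y_0,\dots,y_m)$ (consecutive vertices adjacent) whose interior vertices $y_1,\dots,y_{m-1}$ have degree exactly $2$ in $G$. *)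

theory Defs
  imports Main
begin

definition simple_graph :: "'a set \<Rightarrow> nat \<Rightarrow> (nat \<Rightarrow> 'a set) \<Rightarrow> bool" where
  "simple_graph V n e \<longleftrightarrow> finite V \<and> inj_on e {1..n} \<and>
     (\<forall>j\<in>{1..n}. e j \<subseteq> V \<and> card (e j) = 2)"

definition adjacent :: "nat \<Rightarrow> (nat \<Rightarrow> 'a set) \<Rightarrow> 'a \<Rightarrow> 'a \<Rightarrow> bool" where
  "adjacent n e v w \<longleftrightarrow> (\<exists>j\<in>{1..n}. e j = {v, w})"

definition degree :: "nat \<Rightarrow> (nat \<Rightarrow> 'a set) \<Rightarrow> 'a \<Rightarrow> nat" where
  "degree n e v = card {j \<in> {1..n}. v \<in> e j}"

definition is_path :: "'a set \<Rightarrow> nat \<Rightarrow> (nat \<Rightarrow> 'a set) \<Rightarrow> 'a list \<Rightarrow> bool" where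
  "is_path V n e ys \<longleftrightarrow> ys \<noteq> [] \<and> set ys \<subseteq> V \<and>
     (\<forall>i. Suc i < length ys \<longrightarrow> adjacent n e (ys ! i) (ys ! Suc i)) \<and>
     (\<forall>i. 0 < i \<and> Suc i < length ys \<longrightarrow> degree n e (ys ! i) = 2)"

text \<open>phi_G applied to the edge vector a (a j = coefficient of e j), as element of Z^V.\<close>
definition phiG :: "nat \<Rightarrow> (nat \<Rightarrow> 'a set) \<Rightarrow> (nat \<Rightarrow> nat) \<Rightarrow> 'a \<Rightarrow> int" where
  "phiG n e a v = (\<Sum>j\<in>{1..n}. if v \<in> e j then int (a j) else 0)"

definition in_image_phiG :: "'a set \<Rightarrow> nat \<Rightarrow> (nat \<Rightarrow> 'a set) \<Rightarrow> ('a \<Rightarrow> int) \<Rightarrow> bool" where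
  "in_image_phiG V n e t \<longleftrightarrow> (\<exists>a. \<forall>v\<in>V. t v = phiG n e a v)"

definition DeltaG :: "'a set \<Rightarrow> nat \<Rightarrow> (nat \<Rightarrow> 'a set) \<Rightarrow> ('a \<Rightarrow> nat) \<Rightarrow> nat set set" where
  "DeltaG V n e s = {F. F \<subseteq> {1..n} \<and>
     in_image_phiG V n e (\<lambda>v. int (s v) - phiG n e (\<lambda>j. if j \<in> F then 1 else 0) v)}"

text \<open>Simplicial reduced homology over a field 'k, via the augmented chain complex.
  A (k-1)-chain is a function on faces, supported on faces of cardinality k
  (k = 0: the empty face, giving the augmentation).\<close>
definition chains :: "'k::field itself \<Rightarrow> nat set set \<Rightarrow> nat \<Rightarrow> (nat set \<Rightarrow> 'k) set" where
  "chains _ D k = {c. \<forall>F. c F \<noteq> 0 \<longrightarrow> F \<in> D \<and> card F = k}"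

text \<open>Simplicial boundary: coefficient of face G in sum_F c(F) * boundary(F), with
  boundary(F) = sum_{j \<in> F} (-1)^(position of j in F) (F - {j}).\<close>
definition bd :: "nat set set \<Rightarrow> (nat set \<Rightarrow> 'k::field) \<Rightarrow> nat set \<Rightarrow> 'k" where
  "bd D c G = (if G \<in> D then
     (\<Sum>j\<in>{j \<in> \<Union>D. j \<notin> G \<and> insert j G \<in> D}.
        (-1) ^ card {i \<in> G. i < j} * c (insert j G)) else 0)"

definition acyclic_over :: "'k::field itself \<Rightarrow> nat set set \<Rightarrow> bool" where
  "acyclic_over K D \<longleftrightarrow>
     (\<forall>k. \<forall>c\<in>chains K D k. bd D c = (\<lambda>_. 0) \<longrightarrow>
        (\<exists>d\<in>chains K D (Suc k). bd D d = c))"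

end

theory Submission
  imports Defs
begin

lemma card_less_insert:
  assumes "finite H" "p \<notin> H"
  shows "card {i\<in>insert p H. i < (j::nat)} = card {i\<in>H. i<j} + (if p < j then 1 else 0)"
proof -
  have "{i\<in>insert p H. i < j} = (if p < j then insert p {i\<in>H. i<j} else {i\<in>H. i<j})" by auto
  then show ?thesis using assms by auto
qed

lemma sq_sign: "((-1::'k::field)^m) * (-1)^m = 1"
  by (simp flip: power_add)

lemma sign_swap:
  assumes "finite H" "p \<notin> H" "j \<notin> H" "j \<noteq> (p::nat)"
  shows "(-1::'k::field)^card {i\<in>insert p H. i < j} * (-1)^card {i\<in>insert j H. i < p}
     = - ((-1)^card {i\<in>H. i < j} * (-1)^card {i\<in>H. i < p})"
proof -
  have a: "card {i\<in>insert p H. i < j} = card {i\<in>H. i<j} + (if p < j then 1 else 0)"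
    by (rule card_less_insert[OF assms(1,2)])
  have b: "card {i\<in>insert j H. i < p} = card {i\<in>H. i<p} + (if j < p then 1 else 0)"
    by (rule card_less_insert[OF assms(1,3)])
  show ?thesis unfolding a b using assms(4) by (cases "p < j") (auto simp: power_add)
qed

lemma cone_acyclic:
  fixes D :: "nat set set" and p :: nat and K :: "'k::field itself"
  assumes fin: "finite (\<Union>D)"
    and down: "\<And>G. G \<in> D \<Longrightarrow> p \<in> G \<Longrightarrow> G - {p} \<in> D"
    and cone: "\<And>G. G \<in> D \<Longrightarrow> insert p G \<in> D"
  shows "acyclic_over K D"
  unfolding acyclic_over_def
proof (intro allI ballI impI)
  fix k and c :: "nat set \<Rightarrow> 'k" assume c: "c \<in> chains K D k" and bc: "bd D c = (\<lambda>_. 0)"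
  define d where "d F = (if p \<in> F then (-1)^card{i\<in>F-{p}. i<p} * c (F-{p}) else 0)" for F
  have cD: "c F \<noteq> 0 \<Longrightarrow> F \<in> D \<and> card F = k" for F using c by (auto simp: chains_def)
  have finD: "F \<in> D \<Longrightarrow> finite F" for F using fin by (meson Sup_upper finite_subset)
  show "\<exists>d\<in>chains K D (Suc k). bd D d = c"
  proof (intro bexI[of _ d])
    show "d \<in> chains K D (Suc k)"
      unfolding chains_def
    proof (intro CollectI allI impI)
      fix F assume "d F \<noteq> 0"
      then have pF: "p \<in> F" and "c (F-{p}) \<noteq> 0" by (auto simp: d_def split: if_splits)
      then have H: "F - {p} \<in> D" "card (F-{p}) = k" using cD by auto
      have FF: "F = insert p (F - {p})" using pF by auto
      have "F \<in> D" using cone[OF H(1)] FF by simp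
      moreover have "card F = Suc k" using finD[OF \<open>F \<in> D\<close>] pF H(2)
        by (metis card_Suc_Diff1)
      ultimately show "F \<in> D \<and> card F = Suc k" by simp
    qed
    show "bd D d = c"
    proof
      fix G
      show "bd D d G = c G"
      proof (cases "G \<in> D")
        case False
        then show ?thesis using cD by (auto simp: bd_def)
      next
        case GD: True
        have finG: "finite G" using finD[OF GD] .
        show ?thesis
        proof (cases "p \<in> G")
          case False
          define S where "S = {j \<in> \<Union>D. j \<notin> G \<and> insert j G \<in> D}"
          have pS: "p \<in> S" using cone[OF GD] False by (auto simp: S_def)
          have finS: "finite S" unfolding S_def by (rule finite_subset[OF _ fin]) auto
          have "bd D d G = (\<Sum>j\<in>S. (-1) ^ card {i \<in> G. i < j} * d (insert j G))"
            using GD by (simp add: bd_def S_def)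
          also have "\<dots> = (-1) ^ card {i \<in> G. i < p} * d (insert p G)"
          proof (rule sum.remove[OF finS pS, THEN trans])
            have "(\<Sum>j\<in>S-{p}. (-1) ^ card {i \<in> G. i < j} * d (insert j G)) = 0"
              using False by (intro sum.neutral) (auto simp: d_def S_def)
            then show "(-1) ^ card {i \<in> G. i < p} * d (insert p G) +
              (\<Sum>j\<in>S-{p}. (-1) ^ card {i \<in> G. i < j} * d (insert j G)) =
              (-1) ^ card {i \<in> G. i < p} * d (insert p G)" by simp
          qed
          also have "\<dots> = c G"
          proof -
            have "insert p G - {p} = G" using False by auto
            then show ?thesis by (simp add: d_def mult.assoc[symmetric] sq_sign)
          qed
          finally show ?thesis .
        next
          case True
          define H where "H = G - {p}"
          have HD: "H \<in> D" using down[OF GD True] by (simp add: H_def)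
          have GH: "G = insert p H" and pH: "p \<notin> H" using True by (auto simp: H_def)
          have finH: "finite H" using finG by (simp add: H_def)
          define SH where "SH = {j \<in> \<Union>D. j \<notin> H \<and> insert j H \<in> D}"
          define SG where "SG = {j \<in> \<Union>D. j \<notin> G \<and> insert j G \<in> D}"
          have finSH: "finite SH" unfolding SH_def by (rule finite_subset[OF _ fin]) auto
          have pSH: "p \<in> SH" using GD GH pH True by (auto simp: SH_def)
          have SGH: "SG = SH - {p}"
          proof
            show "SG \<subseteq> SH - {p}"
            proof
              fix j assume j: "j \<in> SG"
              then have "insert j G - {p} \<in> D" using down True by (auto simp: SG_def)
              moreover have "insert j G - {p} = insert j H" using j pH GH by (auto simp: SG_def)
              ultimately show "j \<in> SH - {p}" using j GH by (auto simp: SG_def SH_def)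
            qed
            show "SH - {p} \<subseteq> SG"
            proof
              fix j assume j: "j \<in> SH - {p}"
              then have "insert p (insert j H) \<in> D" using cone by (auto simp: SH_def)
              moreover have "insert p (insert j H) = insert j G" using GH by auto
              ultimately show "j \<in> SG" using j GH by (auto simp: SG_def SH_def)
            qed
          qed
          let ?sH = "(-1::'k) ^ card {i \<in> H. i < p}"
          have "0 = bd D c H" using bc by simp
          also have "\<dots> = (\<Sum>j\<in>SH. (-1) ^ card {i \<in> H. i < j} * c (insert j H))"
            using HD by (simp add: bd_def SH_def)
          also have "\<dots> = ?sH * c G + (\<Sum>j\<in>SG. (-1) ^ card {i \<in> H. i < j} * c (insert j H))"
            unfolding SGH using sum.remove[OF finSH pSH] GH by simp
          finally have eq0: "?sH * c G + (\<Sum>j\<in>SG. (-1) ^ card {i \<in> H. i < j} * c (insert j H)) = 0" by simp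
          have "bd D d G = (\<Sum>j\<in>SG. (-1) ^ card {i \<in> G. i < j} * d (insert j G))"
            using GD by (simp add: bd_def SG_def)
          also have "\<dots> = (\<Sum>j\<in>SG. - ?sH * ((-1) ^ card {i \<in> H. i < j} * c (insert j H)))"
          proof (rule sum.cong[OF refl])
            fix j assume j: "j \<in> SG"
            then have jG: "j \<notin> G" by (auto simp: SG_def)
            then have jH: "j \<notin> H" "j \<noteq> p" using GH by auto
            have e1: "insert j G - {p} = insert j H" using jH pH GH by auto
            have "d (insert j G) = (-1)^card{i\<in>insert j H. i<p} * c (insert j H)"
              unfolding d_def using True e1 by (simp only: insert_iff simp_thms if_True)
            then have "(-1) ^ card {i \<in> G. i < j} * d (insert j G) =
               ((-1::'k) ^ card {i \<in> insert p H. i < j} * (-1)^card{i\<in>insert j H. i<p}) * c (insert j H)"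
              using GH by (simp add: mult.assoc)
            also have "\<dots> = - ((-1) ^ card {i \<in> H. i < j} * ?sH) * c (insert j H)"
              using sign_swap[OF finH pH jH, where 'k='k] by (simp only: minus_mult_left)
            finally show "(-1) ^ card {i \<in> G. i < j} * d (insert j G) =
              - ?sH * ((-1) ^ card {i \<in> H. i < j} * c (insert j H))" by (simp add: algebra_simps)
          qed
          also have "\<dots> = - ?sH * (\<Sum>j\<in>SG. (-1) ^ card {i \<in> H. i < j} * c (insert j H))"
            by (simp add: sum_distrib_left)
          also have "\<dots> = - ?sH * (- (?sH * c G))" proof -
            have "(\<Sum>j\<in>SG. (-1) ^ card {i \<in> H. i < j} * c (insert j H)) = - (?sH * c G)"
              using eq0 by (simp add: add_eq_0_iff2 add.commute)
            then show ?thesis by (simp only:)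
          qed
          also have "\<dots> = c G" by (simp add: mult.assoc[symmetric] sq_sign)
          finally show ?thesis .
        qed
      qed
    qed
  qed
qed

lemma phi_add: "phiG n e (\<lambda>j. f j + g j) v = phiG n e f v + phiG n e g v"
  unfolding phiG_def by (simp add: sum.distrib[symmetric]) (rule sum.cong, auto)

lemma phi_eq:
  assumes "\<And>j. f j + g j = f' j + g' j"
  shows "phiG n e f v + phiG n e g v = phiG n e f' v + phiG n e g' v"
  by (simp add: phi_add[symmetric] assms)

lemma delta_down:
  assumes G: "G \<in> DeltaG V n e s" and p: "p \<in> G"
  shows "G - {p} \<in> DeltaG V n e s"
proof -
  from G obtain b where b: "\<forall>v\<in>V. int (s v) - phiG n e (\<lambda>j. if j \<in> G then 1 else 0) v = phiG n e b v"
    and sub: "G \<subseteq> {1..n}"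
    by (auto simp: DeltaG_def in_image_phiG_def)
  define b' where "b' = b(p := b p + 1)"
  have "\<And>v. phiG n e (\<lambda>j. if j \<in> G then 1 else 0) v + phiG n e b v =
     phiG n e (\<lambda>j. if j \<in> G - {p} then 1 else 0) v + phiG n e b' v"
    by (rule phi_eq) (auto simp: b'_def p)
  note eqs = this
  have "\<forall>v\<in>V. int (s v) - phiG n e (\<lambda>j. if j \<in> G - {p} then 1 else 0) v = phiG n e b' v"
  proof
    fix v assume "v \<in> V"
    then show "int (s v) - phiG n e (\<lambda>j. if j \<in> G - {p} then 1 else 0) v = phiG n e b' v"
      using b eqs[of v] by auto
  qed
  then show ?thesis using sub by (auto simp: DeltaG_def in_image_phiG_def)
qed

lemma delta_cone:
  assumes pn: "p \<in> {1..n}"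
    and key: "\<And>G b. G \<in> DeltaG V n e s \<Longrightarrow> p \<notin> G \<Longrightarrow>
      (\<forall>v\<in>V. int (s v) - phiG n e (\<lambda>j. if j \<in> G then 1 else 0) v = phiG n e b v) \<Longrightarrow> 1 \<le> b p"
    and G: "G \<in> DeltaG V n e s"
  shows "insert p G \<in> DeltaG V n e s"
proof (cases "p \<in> G")
  case True then show ?thesis using G by (simp add: insert_absorb)
next
  case False
  from G obtain b where b: "\<forall>v\<in>V. int (s v) - phiG n e (\<lambda>j. if j \<in> G then 1 else 0) v = phiG n e b v"
    and sub: "G \<subseteq> {1..n}"
    by (auto simp: DeltaG_def in_image_phiG_def)
  have bp: "1 \<le> b p" using key[OF G False b] .
  define b' where "b' = b(p := b p - 1)"
  have "\<And>v. phiG n e (\<lambda>j. if j \<in> G then 1 else 0) v + phiG n e b v =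
     phiG n e (\<lambda>j. if j \<in> insert p G then 1 else 0) v + phiG n e b' v"
    by (rule phi_eq) (use bp False in \<open>auto simp: b'_def\<close>)
  note eqs = this
  have "\<forall>v\<in>V. int (s v) - phiG n e (\<lambda>j. if j \<in> insert p G then 1 else 0) v = phiG n e b' v"
  proof
    fix v assume "v \<in> V"
    then show "int (s v) - phiG n e (\<lambda>j. if j \<in> insert p G then 1 else 0) v = phiG n e b' v"
      using b eqs[of v] by auto
  qed
  then show ?thesis using sub pn by (auto simp: DeltaG_def in_image_phiG_def)
qed

lemma delta_fin: "finite (\<Union>(DeltaG V n e s))"
  by (rule finite_subset[of _ "{1..n}"]) (auto simp: DeltaG_def)

lemma inc_set:
  assumes fin: "finite {j \<in> {1..n}. v \<in> e j}" and deg: "card {j \<in> {1..n}. v \<in> e j} = 2"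
    and ab: "a \<in> {1..n}" "b \<in> {1..n}" "a \<noteq> b" "v \<in> e a" "v \<in> e b"
  shows "{j \<in> {1..n}. v \<in> e j} = {a, b}"
  using ab deg by (intro card_subset_eq[symmetric, OF fin]) auto

lemma phi_inc:
  assumes "{j \<in> {1..n}. v \<in> e j} = {a, b}" "a \<noteq> b"
  shows "phiG n e c v = int (c a) + int (c b)"
proof -
  have "phiG n e c v = (\<Sum>j\<in>{j \<in> {1..n}. v \<in> e j}. int (c j))"
    unfolding phiG_def by (subst sum.inter_filter) auto
  then show ?thesis using assms by simp
qed

theorem lemma3p7:
  fixes V :: "'a set" and n :: nat and e :: "nat \<Rightarrow> 'a set"
    and s :: "'a \<Rightarrow> nat" and x1 x2 x3 x4 :: 'a
  assumes "simple_graph V n e"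
    and "3 \<le> n"
    and "distinct [x1, x2, x3, x4]"
    and "is_path V n e [x1, x2, x3, x4]"
    and "e 1 = {x1, x2}" and "e 2 = {x2, x3}" and "e 3 = {x3, x4}"
    and "in_image_phiG V n e (\<lambda>v. int (s v))"
    and "\<not> acyclic_over TYPE('k::field) (DeltaG V n e s)"
  shows "s x2 = s x3"
proof (rule ccontr)
  assume ne: "s x2 \<noteq> s x3"
  have inV: "x2 \<in> V" "x3 \<in> V" using assms(4) by (auto simp: is_path_def)
  have dg: "\<forall>i. 0 < i \<and> Suc i < length [x1, x2, x3, x4] \<longrightarrow> degree n e ([x1, x2, x3, x4] ! i) = 2"
    using assms(4) unfolding is_path_def by blast
  have d2: "degree n e x2 = 2" using dg[rule_format, of 1] by simp
  have d3: "degree n e x3 = 2" using dg[rule_format, of 2] by simp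
  have fin: "finite {j \<in> {1..n}. v \<in> e j}" for v by simp
  have i2: "{j \<in> {1..n}. x2 \<in> e j} = {1, 2}"
    using assms(2,5,6) d2 by (intro inc_set[OF fin]) (auto simp: degree_def)
  have i3: "{j \<in> {1..n}. x3 \<in> e j} = {2, 3}"
    using assms(2,6,7) d3 by (intro inc_set[OF fin]) (auto simp: degree_def)
  have p2: "phiG n e c x2 = int (c 1) + int (c 2)" for c by (rule phi_inc[OF i2]) simp
  have p3: "phiG n e c x3 = int (c 2) + int (c 3)" for c by (rule phi_inc[OF i3]) simp
  let ?D = "DeltaG V n e s"
  have down: "\<And>G p. G \<in> ?D \<Longrightarrow> p \<in> G \<Longrightarrow> G - {p} \<in> ?D" by (rule delta_down)
  show False
  proof (cases "s x3 < s x2")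
    case True
    have "\<And>G. G \<in> ?D \<Longrightarrow> insert 1 G \<in> ?D"
    proof (rule delta_cone)
      show "(1::nat) \<in> {1..n}" using assms(2) by simp
    next
      fix G b assume "1 \<notin> G" and
        hb: "\<forall>v\<in>V. int (s v) - phiG n e (\<lambda>j. if j \<in> G then 1 else 0) v = phiG n e b v"
      have "int (s x2) - phiG n e (\<lambda>j. if j \<in> G then 1 else 0) x2 = phiG n e b x2"
           "int (s x3) - phiG n e (\<lambda>j. if j \<in> G then 1 else 0) x3 = phiG n e b x3"
        using hb inV by auto
      then show "1 \<le> b 1" using True \<open>1 \<notin> G\<close> unfolding p2 p3 by (auto split: if_splits)
    qed
    then have "acyclic_over TYPE('k) ?D" by (intro cone_acyclic[OF delta_fin down]) auto
    then show False using assms(9) by simp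
  next
    case False
    then have lt: "s x2 < s x3" using ne by simp
    have "\<And>G. G \<in> ?D \<Longrightarrow> insert 3 G \<in> ?D"
    proof (rule delta_cone)
      show "(3::nat) \<in> {1..n}" using assms(2) by simp
    next
      fix G b assume "3 \<notin> G" and
        hb: "\<forall>v\<in>V. int (s v) - phiG n e (\<lambda>j. if j \<in> G then 1 else 0) v = phiG n e b v"
      have "int (s x2) - phiG n e (\<lambda>j. if j \<in> G then 1 else 0) x2 = phiG n e b x2"
           "int (s x3) - phiG n e (\<lambda>j. if j \<in> G then 1 else 0) x3 = phiG n e b x3"
        using hb inV by auto
      then show "1 \<le> b 3" using lt \<open>3 \<notin> G\<close> unfolding p2 p3 by (auto split: if_splits)
    qed
    then have "acyclic_over TYPE('k) ?D" by (intro cone_acyclic[OF delta_fin down]) auto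
    then show False using assms(9) by simp
  qed
qed

end
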